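(* Let $A$ be an integral domain with field of fractions $K$, let $\mathcal P$ be a set of prime ideals of $A$, and let $B=\bigcap_{P\in\mathcal P}A_P$. The following are equivalent: (1) $B$ is a localization of $A$; (2) for every $x\in K\setminus A$ with $(A:_A x)\subseteq\bigcup_{P\in\mathcal P}P$, there is $P\in\mathcal P$ with $(A:_A x)\subseteq P$. Moreover, if each principal ideal of $A$ has only finitely many associated primes, then these are also equivalent to: (3) if $Q$ is an associated prime of a principal ideal of $A$ with $Q\subseteq\bigcup_{P\in\mathcal P}P$, then $Q\subseteq P$ for some $P\in\mathcal P$.
   Context: $(A:_A x)=\{a\in A: ax\in A\}$. An overring $B$ of $A$ is a localization of $A$ if $B=S^{-1}A$ for a multiplicatively closed set $S$ of nonzero elements of $A$. A prime $P$ of $A$ is an associated prime of an ideal $I$ if there is $a\in A$ such that $P$ is a minimal prime over $(I:_A a)=\{r\in A: ra\in I\}$. *)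

theory Defs
  imports "HOL-Computational_Algebra.Fraction_Field"
begin

text \<open>The integral domain A is a type of class idom; its field of fractions K is the type 'a fract.
  A is embedded into K via emb.\<close>

definition emb :: "'a::idom \<Rightarrow> 'a fract" where
  "emb a = Fract a 1"

definition Aset :: "'a::idom fract set" where
  "Aset = range emb"

definition is_ideal :: "'a::idom set \<Rightarrow> bool" where
  "is_ideal I \<longleftrightarrow> 0 \<in> I \<and> (\<forall>a\<in>I. \<forall>b\<in>I. a + b \<in> I) \<and> (\<forall>a\<in>I. \<forall>r. r * a \<in> I)"

definition is_prime_ideal :: "'a::idom set \<Rightarrow> bool" where
  "is_prime_ideal P \<longleftrightarrow> is_ideal P \<and> P \<noteq> UNIV \<and> (\<forall>a b. a * b \<in> P \<longrightarrow> a \<in> P \<or> b \<in> P)"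

definition principal_ideal :: "'a::idom \<Rightarrow> 'a set" where
  "principal_ideal c = {c * r | r. True}"

definition loc_at_prime :: "'a::idom set \<Rightarrow> 'a fract set" where
  "loc_at_prime P = {Fract a s | a s. s \<notin> P}"

definition mult_closed :: "'a::idom set \<Rightarrow> bool" where
  "mult_closed S \<longleftrightarrow> 1 \<in> S \<and> (\<forall>s\<in>S. \<forall>t\<in>S. s * t \<in> S)"

definition loc_set :: "'a::idom set \<Rightarrow> 'a fract set" where
  "loc_set S = {Fract a s | a s. s \<in> S}"

definition is_localization :: "'a::idom fract set \<Rightarrow> bool" where
  "is_localization B \<longleftrightarrow> (\<exists>S. mult_closed S \<and> 0 \<notin> S \<and> B = loc_set S)"

definition conductor :: "'a::idom fract \<Rightarrow> 'a set" where
  "conductor x = {a. emb a * x \<in> Aset}"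

definition colon :: "'a::idom set \<Rightarrow> 'a \<Rightarrow> 'a set" where
  "colon I a = {r. r * a \<in> I}"

definition minimal_prime_over :: "'a::idom set \<Rightarrow> 'a set \<Rightarrow> bool" where
  "minimal_prime_over P J \<longleftrightarrow> is_prime_ideal P \<and> J \<subseteq> P \<and>
     (\<forall>Q. is_prime_ideal Q \<and> J \<subseteq> Q \<and> Q \<subseteq> P \<longrightarrow> Q = P)"

definition associated_prime :: "'a::idom set \<Rightarrow> 'a set \<Rightarrow> bool" where
  "associated_prime P I \<longleftrightarrow> (\<exists>a. minimal_prime_over P (colon I a))"

end

theory Submission
  imports Defs
begin


lemma prime_mult: "is_prime_ideal P \<Longrightarrow> a \<in> P \<Longrightarrow> r * a \<in> P"
  by (simp add: is_prime_ideal_def is_ideal_def)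
lemma prime_zero: "is_prime_ideal P \<Longrightarrow> 0 \<in> P"
  by (simp add: is_prime_ideal_def is_ideal_def)
lemma prime_one: assumes P: "is_prime_ideal P" shows "1 \<notin> P"
proof
  assume "1 \<in> P"
  then have "r \<in> P" for r using prime_mult[OF P, of 1 r] by simp
  then show False using P by (auto simp: is_prime_ideal_def)
qed
lemma prime_mult2: "is_prime_ideal P \<Longrightarrow> a \<in> P \<Longrightarrow> a * r \<in> P"
  by (metis prime_mult mult.commute)
lemma prime_prod: "is_prime_ideal P \<Longrightarrow> a * b \<in> P \<Longrightarrow> a \<in> P \<or> b \<in> P"
  by (simp add: is_prime_ideal_def)
lemma prime_power: assumes P: "is_prime_ideal P" shows "a ^ m \<in> P \<Longrightarrow> a \<in> P"
proof (induction m)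
  case 0
  then show ?case using prime_one[OF P] by simp
next
  case (Suc m)
  then show ?case using prime_prod[OF P, of a "a ^ m"] by auto
qed
lemma prime_setprod: assumes "is_prime_ideal P" "finite G" "\<forall>g\<in>G. f g \<notin> P" shows "prod f G \<notin> P"
  using assms(2,3) by (induction G rule: finite_induct) (auto simp: prime_one[OF assms(1)] dest: prime_prod[OF assms(1)])

lemma colon_ideal: "is_ideal (colon (principal_ideal c) a)"
  unfolding is_ideal_def
proof (intro conjI ballI allI)
  show "0 \<in> colon (principal_ideal c) a"
  proof -
    have "0 * a = c * 0" by simp
    then show ?thesis unfolding colon_def principal_ideal_def by blast
  qed
next
  fix x y assume "x \<in> colon (principal_ideal c) a" "y \<in> colon (principal_ideal c) a"
  then obtain u v where "x * a = c * u" "y * a = c * v" unfolding colon_def principal_ideal_def by auto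
  then have "(x + y) * a = c * (u + v)" by (simp add: algebra_simps)
  then show "x + y \<in> colon (principal_ideal c) a" unfolding colon_def principal_ideal_def by blast
next
  fix x r assume "x \<in> colon (principal_ideal c) a"
  then obtain u where "x * a = c * u" unfolding colon_def principal_ideal_def by auto
  then have "(r * x) * a = c * (r * u)" by (metis mult.assoc mult.left_commute)
  then show "r * x \<in> colon (principal_ideal c) a" unfolding colon_def principal_ideal_def by blast
qed

lemma colon_mult: "r \<in> colon (principal_ideal c) a \<Longrightarrow> s * r \<in> colon (principal_ideal c) a"
  using colon_ideal[of c a] unfolding is_ideal_def by blast

lemma conductor_Fract: "c \<noteq> 0 \<Longrightarrow> conductor (Fract a c) = colon (principal_ideal c) a"
proof -
  assume c: "c \<noteq> 0"
  have "emb r * Fract a c \<in> Aset \<longleftrightarrow> r * a \<in> principal_ideal c" for r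
  proof
    assume "emb r * Fract a c \<in> Aset"
    then obtain b where "Fract (r * a) c = Fract b 1" by (auto simp: emb_def Aset_def)
    then have "r * a = b * c" using c by (simp add: eq_fract)
    then show "r * a \<in> principal_ideal c" by (auto simp: principal_ideal_def mult.commute)
  next
    assume "r * a \<in> principal_ideal c"
    then obtain b where "r * a = c * b" by (auto simp: principal_ideal_def)
    then have "Fract (r * a) c = Fract b 1" using c by (simp add: eq_fract mult.commute)
    then show "emb r * Fract a c \<in> Aset" by (auto simp: emb_def Aset_def)
  qed
  then show ?thesis by (auto simp: conductor_def colon_def)
qed

lemma ideal_add: "is_ideal I \<Longrightarrow> a \<in> I \<Longrightarrow> b \<in> I \<Longrightarrow> a + b \<in> I"
  by (simp add: is_ideal_def)
lemma ideal_mult: "is_ideal I \<Longrightarrow> a \<in> I \<Longrightarrow> r * a \<in> I"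
  by (simp add: is_ideal_def)

lemma PIT:
  assumes I: "is_ideal I" and T1: "1 \<in> T" and Tm: "\<forall>s\<in>T. \<forall>t\<in>T. s * t \<in> T"
    and disj: "I \<inter> T = {}"
  shows "\<exists>P. is_prime_ideal P \<and> I \<subseteq> P \<and> P \<inter> T = {}"
proof -
  define A where "A = {J. is_ideal J \<and> I \<subseteq> J \<and> J \<inter> T = {}}"
  have "\<exists>M\<in>A. \<forall>X\<in>A. M \<subseteq> X \<longrightarrow> X = M"
  proof (rule subset_Zorn)
    fix C assume ch: "subset.chain A C"
    show "\<exists>U\<in>A. \<forall>X\<in>C. X \<subseteq> U"
    proof (cases "C = {}")
      case True
      then show ?thesis using I disj by (auto simp: A_def)
    next
      case False
      have CA: "C \<subseteq> A" and lin: "\<forall>X\<in>C. \<forall>Y\<in>C. X \<subseteq> Y \<or> Y \<subseteq> X"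
        using ch by (auto simp: subset_chain_def)
      have "is_ideal (\<Union>C)"
        unfolding is_ideal_def
      proof (intro conjI ballI allI)
        show "0 \<in> \<Union>C" using False CA by (auto simp: A_def is_ideal_def)
      next
        fix a b assume "a \<in> \<Union>C" "b \<in> \<Union>C"
        then obtain X Y where XY: "X \<in> C" "Y \<in> C" "a \<in> X" "b \<in> Y" by auto
        then show "a + b \<in> \<Union>C" using lin CA
          by (smt (verit, ccfv_threshold) A_def UnionI ideal_add mem_Collect_eq subsetD)
      next
        fix a r assume "a \<in> \<Union>C"
        then obtain X where "X \<in> C" "a \<in> X" by auto
        then show "r * a \<in> \<Union>C" using CA ideal_mult[of X a r] by (auto simp: A_def)
      qed
      moreover have "I \<subseteq> \<Union>C" "\<Union>C \<inter> T = {}" using False CA by (auto simp: A_def)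
      ultimately show ?thesis by (auto simp: A_def)
    qed
  qed
  then obtain M where MA: "M \<in> A" and Mmax: "\<forall>X\<in>A. M \<subseteq> X \<longrightarrow> X = M" by blast
  have Mi: "is_ideal M" and IM: "I \<subseteq> M" and MT: "M \<inter> T = {}" using MA by (auto simp: A_def)
  have "is_prime_ideal M"
    unfolding is_prime_ideal_def
  proof (intro conjI allI impI Mi)
    show "M \<noteq> UNIV" using MT T1 by auto
  next
    fix a b assume ab: "a * b \<in> M"
    show "a \<in> M \<or> b \<in> M"
    proof (rule ccontr)
      assume nab: "\<not> (a \<in> M \<or> b \<in> M)"
      have ext: "\<exists>m\<in>M. \<exists>r. m + r * x \<in> T" if "x \<notin> M" for x
      proof (rule ccontr)
        assume no: "\<not> ?thesis"
        define Mx where "Mx = {m + r * x | m r. m \<in> M}"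
        have "is_ideal Mx" unfolding is_ideal_def Mx_def
        proof (intro conjI ballI allI)
          show "0 \<in> {m + r * x |m r. m \<in> M}" using Mi
            by (auto simp: is_ideal_def intro!: exI[of _ 0])
        next
          fix p q assume "p \<in> {m + r * x |m r. m \<in> M}" "q \<in> {m + r * x |m r. m \<in> M}"
          then obtain m1 r1 m2 r2 where "p = m1 + r1 * x" "q = m2 + r2 * x" "m1 \<in> M" "m2 \<in> M" by auto
          moreover have "p + q = (m1 + m2) + (r1 + r2) * x" using \<open>p = m1 + r1 * x\<close> \<open>q = m2 + r2 * x\<close>
            by (simp add: algebra_simps)
          moreover have "m1 + m2 \<in> M" using ideal_add[OF Mi] \<open>m1 \<in> M\<close> \<open>m2 \<in> M\<close> by blast
          ultimately show "p + q \<in> {m + r * x |m r. m \<in> M}" by blast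
        next
          fix p s assume "p \<in> {m + r * x |m r. m \<in> M}"
          then obtain m1 r1 where "p = m1 + r1 * x" "m1 \<in> M" by auto
          moreover have "s * p = (s * m1) + (s * r1) * x" using \<open>p = m1 + r1 * x\<close>
            by (simp add: algebra_simps)
          moreover have "s * m1 \<in> M" using ideal_mult[OF Mi] \<open>m1 \<in> M\<close> by blast
          ultimately show "s * p \<in> {m + r * x |m r. m \<in> M}" by blast
        qed
        moreover have "M \<subseteq> Mx" unfolding Mx_def by (force intro: exI[of _ 0])
        moreover have "Mx \<inter> T = {}" using no unfolding Mx_def by auto
        ultimately have "Mx \<in> A" "M \<subseteq> Mx" using IM by (auto simp: A_def)
        with Mmax have "Mx = M" by blast
        moreover have "x \<in> Mx" unfolding Mx_def
        proof -
          have "x = 0 + 1 * x" by simp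
          moreover have "(0::'a) \<in> M" using Mi by (simp add: is_ideal_def)
          ultimately show "x \<in> {m + r * x |m r. m \<in> M}" by blast
        qed
        ultimately show False using that by simp
      qed
      obtain m1 r1 where 1: "m1 \<in> M" "m1 + r1 * a \<in> T" using ext nab by blast
      obtain m2 r2 where 2: "m2 \<in> M" "m2 + r2 * b \<in> T" using ext nab by blast
      have "(m1 + r1 * a) * (m2 + r2 * b) = m1 * (m2 + r2 * b) + (r1 * a) * m2 + (r1 * r2) * (a * b)"
        by (simp add: algebra_simps)
      also have "\<dots> \<in> M"
      proof -
        have "m1 * (m2 + r2 * b) \<in> M" using ideal_mult[OF Mi 1(1), of "m2 + r2 * b"] by (simp add: mult.commute)
        moreover have "(r1 * a) * m2 \<in> M" using ideal_mult[OF Mi 2(1)] by blast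
        moreover have "(r1 * r2) * (a * b) \<in> M" using ideal_mult[OF Mi ab] by blast
        ultimately show ?thesis using ideal_add[OF Mi] by blast
      qed
      finally show False using 1 2 Tm MT by blast
    qed
  qed
  then show ?thesis using IM MT by blast
qed

lemma minimal_below:
  assumes P0: "is_prime_ideal P0" and JP: "J \<subseteq> P0"
  shows "\<exists>Q. minimal_prime_over Q J \<and> Q \<subseteq> P0"
proof -
  define S where "S = {Q. is_prime_ideal Q \<and> J \<subseteq> Q \<and> Q \<subseteq> P0}"
  define A where "A = uminus ` S"
  have "\<exists>M\<in>A. \<forall>X\<in>A. M \<subseteq> X \<longrightarrow> X = M"
  proof (rule subset_Zorn)
    fix C assume ch: "subset.chain A C"
    show "\<exists>U\<in>A. \<forall>X\<in>C. X \<subseteq> U"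
    proof (cases "C = {}")
      case True
      have "P0 \<in> S" using P0 JP by (simp add: S_def)
      then have "- P0 \<in> A" unfolding A_def by (rule imageI)
      then show ?thesis using True by blast
    next
      case False
      have CA: "C \<subseteq> A" and lin: "\<forall>X\<in>C. \<forall>Y\<in>C. X \<subseteq> Y \<or> Y \<subseteq> X"
        using ch by (auto simp: subset_chain_def)
      define D where "D = uminus ` C"
      have DS: "D \<subseteq> S"
      proof
        fix X assume "X \<in> D"
        then obtain Y where "Y \<in> C" "X = - Y" by (auto simp: D_def)
        then obtain Z where "Z \<in> S" "Y = - Z" using CA by (auto simp: A_def)
        then show "X \<in> S" using \<open>X = - Y\<close> by simp
      qed
      have Dne: "D \<noteq> {}" using False by (simp add: D_def)
      have lin2: "\<forall>X\<in>D. \<forall>Y\<in>D. X \<subseteq> Y \<or> Y \<subseteq> X"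
      proof (intro ballI)
        fix X Y assume "X \<in> D" "Y \<in> D"
        then obtain X' Y' where "X' \<in> C" "Y' \<in> C" "X = - X'" "Y = - Y'" by (auto simp: D_def)
        then show "X \<subseteq> Y \<or> Y \<subseteq> X" using lin by auto
      qed
      have pr: "\<And>X. X \<in> D \<Longrightarrow> is_prime_ideal X" using DS by (auto simp: S_def)
      have "is_prime_ideal (\<Inter>D)"
        unfolding is_prime_ideal_def is_ideal_def
      proof (intro conjI ballI allI impI)
        show "0 \<in> \<Inter>D" using pr prime_zero by blast
        show "\<And>a b. a \<in> \<Inter>D \<Longrightarrow> b \<in> \<Inter>D \<Longrightarrow> a + b \<in> \<Inter>D"
          using pr by (auto simp: is_prime_ideal_def is_ideal_def)
        show "\<And>a r. a \<in> \<Inter>D \<Longrightarrow> r * a \<in> \<Inter>D" using pr prime_mult by blast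
        show "\<Inter>D \<noteq> UNIV" using pr prime_one Dne by blast
      next
        fix a b assume ab: "a * b \<in> \<Inter>D"
        show "a \<in> \<Inter>D \<or> b \<in> \<Inter>D"
        proof (rule ccontr)
          assume "\<not> ?thesis"
          then obtain X Y where XY: "X \<in> D" "Y \<in> D" "a \<notin> X" "b \<notin> Y" by auto
          show False
          proof (cases "X \<subseteq> Y")
            case True
            then show ?thesis using XY ab pr[of X] prime_prod by blast
          next
            case False
            then have "Y \<subseteq> X" using lin2 XY by blast
            then show ?thesis using XY ab pr[of Y] prime_prod by blast
          qed
        qed
      qed
      moreover have "J \<subseteq> \<Inter>D" using DS by (auto simp: S_def)
      moreover have "\<Inter>D \<subseteq> P0" using DS Dne by (auto simp: S_def)
      ultimately have "\<Inter>D \<in> S" by (simp add: S_def)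
      then have "- \<Inter>D \<in> A" unfolding A_def by (rule imageI)
      moreover have "\<forall>X\<in>C. X \<subseteq> - \<Inter>D"
      proof
        fix X assume "X \<in> C"
        then have "- X \<in> D" by (simp add: D_def)
        then show "X \<subseteq> - \<Inter>D" by blast
      qed
      ultimately show ?thesis by blast
    qed
  qed
  then obtain M where MA: "M \<in> A" and Mmax: "\<forall>X\<in>A. M \<subseteq> X \<longrightarrow> X = M" by blast
  obtain Q where QS: "Q \<in> S" and MQ: "M = - Q" using MA by (auto simp: A_def)
  have "minimal_prime_over Q J"
    unfolding minimal_prime_over_def
  proof (intro conjI allI impI)
    show "is_prime_ideal Q" "J \<subseteq> Q" using QS by (auto simp: S_def)
  next
    fix Q' assume Q': "is_prime_ideal Q' \<and> J \<subseteq> Q' \<and> Q' \<subseteq> Q"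
    then have "Q' \<in> S" using QS by (auto simp: S_def)
    then have "- Q' \<in> A" by (auto simp: A_def)
    moreover have "M \<subseteq> - Q'" using Q' MQ by auto
    ultimately have "- Q' = M" using Mmax by blast
    then show "Q' = Q" using MQ by simp
  qed
  then show ?thesis using QS by (auto simp: S_def)
qed


lemma loc_lemma:
  assumes m: "minimal_prime_over Q I" and I: "is_ideal I" and r: "r \<in> Q"
  shows "\<exists>u m. u \<notin> Q \<and> u * r ^ m \<in> I"
proof (rule ccontr)
  assume no: "\<not> ?thesis"
  have Q: "is_prime_ideal Q" using m by (simp add: minimal_prime_over_def)
  define T where "T = {u * r ^ m | u m. u \<notin> Q}"
  have "(1::'a) = 1 * r ^ 0" by simp
  then have "1 \<in> T" unfolding T_def using prime_one[OF Q] by blast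
  moreover have "\<forall>s\<in>T. \<forall>t\<in>T. s * t \<in> T"
  proof (intro ballI)
    fix s t assume "s \<in> T" "t \<in> T"
    then obtain u m u' m' where "s = u * r ^ m" "t = u' * r ^ m'" "u \<notin> Q" "u' \<notin> Q"
      unfolding T_def by blast
    moreover have "s * t = (u * u') * r ^ (m + m')" using calculation by (simp add: algebra_simps power_add)
    moreover have "u * u' \<notin> Q" using calculation prime_prod[OF Q] by blast
    ultimately show "s * t \<in> T" unfolding T_def by blast
  qed
  moreover have "I \<inter> T = {}" using no unfolding T_def by blast
  ultimately obtain P where P: "is_prime_ideal P" "I \<subseteq> P" "P \<inter> T = {}"
    using PIT[OF I] by blast
  have "P \<subseteq> Q"
  proof
    fix p assume "p \<in> P"
    show "p \<in> Q"
    proof (rule ccontr)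
      assume "p \<notin> Q"
      then have "p * r ^ 0 \<in> T" unfolding T_def by blast
      then show False using P \<open>p \<in> P\<close> by auto
    qed
  qed
  then have "P = Q" using m P unfolding minimal_prime_over_def by blast
  moreover have "1 * r ^ 1 \<in> T" unfolding T_def using prime_one[OF Q] by blast
  ultimately show False using P r by auto
qed

lemma cond_Fract: "s \<in> conductor x \<Longrightarrow> s \<noteq> 0 \<Longrightarrow> \<exists>b. x = Fract b s"
proof -
  assume s: "s \<in> conductor x" "s \<noteq> 0"
  obtain a c where x: "x = Fract a c" "c \<noteq> 0" by (cases x)
  then have "emb s * x = Fract (s * a) c" by (simp add: emb_def)
  with s obtain b where "Fract (s * a) c = Fract b 1" by (auto simp: conductor_def Aset_def emb_def)
  then have "s * a = b * c" using x by (simp add: eq_fract)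
  then have "x = Fract b s" using x s by (simp add: eq_fract mult.commute)
  then show ?thesis by blast
qed

lemma Fract_cond: "s \<noteq> 0 \<Longrightarrow> s \<in> conductor (Fract b s)"
proof -
  assume s: "s \<noteq> 0"
  have "emb s * Fract b s = Fract b 1" using s by (simp add: emb_def eq_fract mult.commute)
  then show ?thesis by (auto simp: conductor_def Aset_def emb_def)
qed

lemma loc_at_iff:
  assumes P: "is_prime_ideal P"
  shows "x \<in> loc_at_prime P \<longleftrightarrow> (\<exists>s\<in>conductor x. s \<notin> P)"
proof
  assume "x \<in> loc_at_prime P"
  then obtain a s where "x = Fract a s" "s \<notin> P" by (auto simp: loc_at_prime_def)
  moreover have "s \<noteq> 0" using calculation prime_zero[OF P] by auto
  ultimately show "\<exists>s\<in>conductor x. s \<notin> P" using Fract_cond by blast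
next
  assume "\<exists>s\<in>conductor x. s \<notin> P"
  then obtain s where "s \<in> conductor x" "s \<notin> P" by blast
  moreover have "s \<noteq> 0" using calculation prime_zero[OF P] by auto
  ultimately obtain b where "x = Fract b s" using cond_Fract by blast
  then show "x \<in> loc_at_prime P" using \<open>s \<notin> P\<close> by (auto simp: loc_at_prime_def)
qed

lemma part1_fwd:
  assumes primes: "\<forall>P\<in>\<P>. is_prime_ideal P"
    and loc: "is_localization (\<Inter>P\<in>\<P>. loc_at_prime P)"
    and c: "conductor x \<subseteq> \<Union>\<P>"
  shows "\<exists>P\<in>\<P>. conductor x \<subseteq> P"
proof (rule ccontr)
  assume no: "\<not> ?thesis"
  obtain T where T: "mult_closed T" "0 \<notin> T" "(\<Inter>P\<in>\<P>. loc_at_prime P) = loc_set T"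
    using loc by (auto simp: is_localization_def)
  have "x \<in> (\<Inter>P\<in>\<P>. loc_at_prime P)" using no primes loc_at_iff by blast
  then obtain b t where bt: "x = Fract b t" "t \<in> T" using T by (auto simp: loc_set_def)
  have t0: "t \<noteq> 0" using bt T by auto
  then have "t \<in> conductor x" using bt Fract_cond by blast
  then obtain P where P: "P \<in> \<P>" "t \<in> P" using c by auto
  have "Fract 1 t \<in> loc_set T" using bt by (auto simp: loc_set_def)
  then have "Fract 1 t \<in> loc_at_prime P" using T P by auto
  then obtain c u where cu: "Fract 1 t = Fract c u" "u \<notin> P" by (auto simp: loc_at_prime_def)
  have u0: "u \<noteq> 0" using cu prime_zero primes P by metis
  have "u = c * t" using cu t0 u0 by (simp add: eq_fract)
  then have "u \<in> P" using prime_mult primes P by metis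
  then show False using cu by blast
qed

lemma part1_bwd:
  assumes primes: "\<forall>P\<in>\<P>. is_prime_ideal P"
    and c2: "\<forall>x. x \<notin> Aset \<and> conductor x \<subseteq> \<Union>\<P> \<longrightarrow> (\<exists>P\<in>\<P>. conductor x \<subseteq> P)"
  shows "is_localization (\<Inter>P\<in>\<P>. loc_at_prime P)"
proof (cases "\<P> = {}")
  case True
  have "mult_closed {s. s \<noteq> 0}" by (simp add: mult_closed_def)
  moreover have "(UNIV :: 'a fract set) = loc_set {s. s \<noteq> 0}"
    by (auto simp: loc_set_def) (metis Fract_cases)
  ultimately show ?thesis using True unfolding is_localization_def by force
next
  case False
  define S where "S = - \<Union>\<P>"
  have 0: "0 \<notin> S" using False primes prime_zero by (auto simp: S_def)
  have "mult_closed S" unfolding mult_closed_def S_def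
    using primes prime_one prime_prod by blast
  moreover have "(\<Inter>P\<in>\<P>. loc_at_prime P) = loc_set S"
  proof
    show "loc_set S \<subseteq> (\<Inter>P\<in>\<P>. loc_at_prime P)"
      by (auto simp: loc_set_def loc_at_prime_def S_def)
  next
    show "(\<Inter>P\<in>\<P>. loc_at_prime P) \<subseteq> loc_set S"
    proof
      fix x assume xB: "x \<in> (\<Inter>P\<in>\<P>. loc_at_prime P)"
      show "x \<in> loc_set S"
      proof (cases "x \<in> Aset")
        case True
        then obtain b where "x = Fract b 1" by (auto simp: Aset_def emb_def)
        moreover have "1 \<in> S" using \<open>mult_closed S\<close> by (simp add: mult_closed_def)
        ultimately show ?thesis by (auto simp: loc_set_def)
      next
        case False
        have "\<forall>P\<in>\<P>. \<not> conductor x \<subseteq> P" using xB primes loc_at_iff by blast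
        then have "\<not> conductor x \<subseteq> \<Union>\<P>" using c2 False by blast
        then obtain s where s: "s \<in> conductor x" "s \<in> S" by (auto simp: S_def)
        then have "s \<noteq> 0" using 0 by auto
        then obtain b where "x = Fract b s" using cond_Fract s by blast
        then show ?thesis using s by (auto simp: loc_set_def)
      qed
    qed
  qed
  ultimately show ?thesis using 0 unfolding is_localization_def by blast
qed


lemma colon_t: "r \<in> colon (principal_ideal c) (a * t) \<longleftrightarrow> r * t \<in> colon (principal_ideal c) a"
  by (simp add: colon_def ac_simps)

lemma c3_to_c2:
  assumes primes: "\<forall>P\<in>\<P>. is_prime_ideal P"
    and fin: "\<forall>c::'a::idom. finite {Q. associated_prime Q (principal_ideal c)}"
    and c3: "\<forall>Q. (\<exists>c. associated_prime Q (principal_ideal c)) \<and> Q \<subseteq> \<Union>\<P> \<longrightarrow> (\<exists>P\<in>\<P>. Q \<subseteq> P)"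
    and cx: "conductor (x :: 'a fract) \<subseteq> \<Union>\<P>"
  shows "\<exists>P\<in>\<P>. conductor x \<subseteq> P"
proof -
  obtain a c where x: "x = Fract a c" "c \<noteq> 0" by (cases x)
  define I where "I = colon (principal_ideal c) a"
  have CI: "conductor x = I" unfolding I_def x(1) by (rule conductor_Fract[OF x(2)])
  define M where "M = {Q. minimal_prime_over Q I}"
  have "M \<subseteq> {Q. associated_prime Q (principal_ideal c)}"
    by (auto simp: M_def I_def associated_prime_def)
  then have finM: "finite M" using fin[rule_format, of c] by (rule finite_subset)
  show ?thesis
  proof (cases "\<exists>Q\<in>M. Q \<subseteq> \<Union>\<P>")
    case True
    then obtain Q where Q: "Q \<in> M" "Q \<subseteq> \<Union>\<P>" by blast
    then have "associated_prime Q (principal_ideal c)"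
      by (auto simp: M_def I_def associated_prime_def)
    then obtain P where "P \<in> \<P>" "Q \<subseteq> P" using c3 Q by blast
    moreover have "I \<subseteq> Q" using Q by (auto simp: M_def minimal_prime_over_def)
    ultimately show ?thesis using CI by blast
  next
    case False
    then have "\<forall>Q\<in>M. \<exists>q. q \<in> Q \<and> q \<notin> \<Union>\<P>" by (simp add: subset_iff)
    then obtain qf where qf: "\<forall>Q\<in>M. qf Q \<in> Q \<and> qf Q \<notin> \<Union>\<P>" by (rule bchoice[THEN exE])
    define q where "q = prod qf M"
    have qP: "q \<notin> P" if "P \<in> \<P>" for P
    proof -
      have "is_prime_ideal P" using primes that by blast
      moreover have "\<forall>g\<in>M. qf g \<notin> P" using qf that by blast
      ultimately show ?thesis unfolding q_def using prime_setprod[OF _ finM, of P qf] by blast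
    qed
    have "\<exists>m. q ^ m \<in> I"
    proof (rule ccontr)
      assume no: "\<not> ?thesis"
      have "power q 0 \<in> range (power q)" by (rule rangeI)
      then have "1 \<in> range (power q)" by simp
      moreover have "\<forall>s\<in>range (power q). \<forall>t\<in>range (power q). s * t \<in> range (power q)"
      proof (intro ballI)
        fix s t assume "s \<in> range (power q)" "t \<in> range (power q)"
        then obtain i j where "s = q ^ i" "t = q ^ j" by blast
        then have "s * t = q ^ (i + j)" by (simp add: power_add)
        then show "s * t \<in> range (power q)" by blast
      qed
      moreover have "I \<inter> range (power q) = {}"
      proof (rule ccontr)
        assume "I \<inter> range (power q) \<noteq> {}"
        then obtain m where "q ^ m \<in> I" by auto
        then show False using no by blast
      qed
      ultimately have "\<exists>P. is_prime_ideal P \<and> I \<subseteq> P \<and> P \<inter> range (power q) = {}"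
        by (rule PIT[OF colon_ideal[of c a, folded I_def]])
      then obtain P' where P': "is_prime_ideal P'" "I \<subseteq> P'" "P' \<inter> range (power q) = {}"
        by blast
      obtain Q where Q: "minimal_prime_over Q I" "Q \<subseteq> P'" using minimal_below[OF P'(1,2)] by blast
      have QM: "Q \<in> M" using Q by (simp add: M_def)
      have Qp: "is_prime_ideal Q" using Q by (simp add: minimal_prime_over_def)
      have "q = qf Q * prod qf (M - {Q})" unfolding q_def by (rule prod.remove[OF finM QM])
      moreover have "qf Q \<in> Q" using qf QM by blast
      ultimately have "q \<in> Q" using prime_mult2[OF Qp, of "qf Q" "prod qf (M - {Q})"] by argo
      then have "q \<in> P'" using Q(2) by (rule subsetD[rotated])
      moreover have "power q 1 \<in> range (power q)" by (rule rangeI)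
      then have "q \<in> range (power q)" by simp
      ultimately show False using P'(3) by blast
    qed
    then obtain m where "q ^ m \<in> I" by blast
    then have "q ^ m \<in> \<Union>\<P>" using cx CI by blast
    then obtain P where "P \<in> \<P>" "q ^ m \<in> P" by blast
    then have "q \<in> P" using prime_power[of P q m] primes by blast
    then show ?thesis using qP \<open>P \<in> \<P>\<close> by blast
  qed
qed

lemma c2_to_c3:
  assumes primes: "\<forall>P\<in>\<P>. is_prime_ideal P"
    and fin: "\<forall>c::'a::idom. finite {Q. associated_prime Q (principal_ideal c)}"
    and c2: "\<forall>x::'a fract. x \<notin> Aset \<and> conductor x \<subseteq> \<Union>\<P> \<longrightarrow> (\<exists>P\<in>\<P>. conductor x \<subseteq> P)"
    and mQ: "minimal_prime_over Q (colon (principal_ideal c) a)"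
    and QU: "Q \<subseteq> \<Union>\<P>"
  shows "\<exists>P\<in>\<P>. Q \<subseteq> P"
proof -
  have Qp: "is_prime_ideal Q" using mQ by (simp add: minimal_prime_over_def)
  define I where "I = colon (principal_ideal c) a"
  have II: "is_ideal I" using colon_ideal I_def by blast
  have IQ: "I \<subseteq> Q" using mQ I_def by (simp add: minimal_prime_over_def)
  show ?thesis
  proof (cases "c = 0")
    case True
    have p0: "principal_ideal c = {0}" using True by (auto simp: principal_ideal_def)
    have a0: "a \<noteq> 0"
    proof
      assume "a = 0"
      then have "1 \<in> I" using p0 by (simp add: I_def colon_def)
      then show False using IQ prime_one[OF Qp] by blast
    qed
    have "(1::'a) \<notin> {0}" by simp
    then have z: "is_prime_ideal ({0} :: 'a set)"
      unfolding is_prime_ideal_def is_ideal_def by (auto dest: sym) (metis UNIV_I singletonD zero_neq_one)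
    have "I \<subseteq> {0}" using p0 a0 by (auto simp: I_def colon_def)
    moreover have "{0} \<subseteq> Q" using prime_zero[OF Qp] by blast
    ultimately have "Q = {0}" using mQ z unfolding minimal_prime_over_def I_def by blast
    moreover obtain P where "P \<in> \<P>" using QU prime_zero[OF Qp] by blast
    ultimately show ?thesis using primes prime_zero by blast
  next
    case c0: False
    define F where "F = {Q'. associated_prime Q' (principal_ideal c)}"
    define G where "G = {Q' \<in> F. \<not> Q \<subseteq> Q'}"
    have finG: "finite G" using fin unfolding G_def F_def by auto
    have "\<forall>Q'\<in>G. \<exists>u s. u \<notin> Q \<and> s \<notin> Q' \<and> s * u \<in> I"
    proof
      fix Q' assume QG: "Q' \<in> G"
      then obtain r where r: "r \<in> Q" "r \<notin> Q'" by (auto simp: G_def)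
      have Q'p: "is_prime_ideal Q'" using QG
        by (auto simp: G_def F_def associated_prime_def minimal_prime_over_def)
      obtain u m where "u \<notin> Q" "u * r ^ m \<in> I" using loc_lemma[OF mQ[folded I_def] II r(1)] by blast
      moreover have "r ^ m \<notin> Q'" using r prime_power[OF Q'p] by blast
      moreover have "r ^ m * u \<in> I" using calculation(2) by (simp add: mult.commute)
      ultimately show "\<exists>u s. u \<notin> Q \<and> s \<notin> Q' \<and> s * u \<in> I" by blast
    qed
    then have "\<forall>Q'\<in>G. \<exists>p. fst p \<notin> Q \<and> snd p \<notin> Q' \<and> snd p * fst p \<in> I" by auto
    then obtain pf where pf: "\<forall>Q'\<in>G. fst (pf Q') \<notin> Q \<and> snd (pf Q') \<notin> Q' \<and> snd (pf Q') * fst (pf Q') \<in> I"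
      by (rule bchoice[THEN exE])
    define uf where "uf = (\<lambda>Q'. fst (pf Q'))"
    define sf where "sf = (\<lambda>Q'. snd (pf Q'))"
    have usf: "\<forall>Q'\<in>G. uf Q' \<notin> Q \<and> sf Q' \<notin> Q' \<and> sf Q' * uf Q' \<in> I"
      using pf by (simp add: uf_def sf_def)
    define t where "t = prod uf G"
    have "\<forall>g\<in>G. uf g \<notin> Q" using usf by blast
    then have tQ: "t \<notin> Q" unfolding t_def by (rule prime_setprod[OF Qp finG])
    have st: "sf Q' * t \<in> I" if "Q' \<in> G" for Q'
    proof -
      have "t = uf Q' * prod uf (G - {Q'})" unfolding t_def by (rule prod.remove[OF finG that])
      then have "sf Q' * t = prod uf (G - {Q'}) * (sf Q' * uf Q')" by (simp add: algebra_simps)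
      moreover have "sf Q' * uf Q' \<in> I" using usf that by blast
      moreover have "prod uf (G - {Q'}) * (sf Q' * uf Q') \<in> I"
        using ideal_mult[OF II, of "sf Q' * uf Q'" "prod uf (G - {Q'})"] calculation(2) by blast
      ultimately show ?thesis by argo
    qed
    define J where "J = colon (principal_ideal c) (a * t)"
    have Jiff: "r \<in> J \<longleftrightarrow> r * t \<in> I" for r unfolding J_def I_def by (rule colon_t)
    have JQ: "J \<subseteq> Q"
    proof
      fix r assume "r \<in> J"
      then have "r * t \<in> Q" using Jiff IQ by blast
      then show "r \<in> Q" using prime_prod[OF Qp] tQ by blast
    qed
    define y where "y = Fract (a * t) c"
    have Cy: "conductor y = J" using conductor_Fract[OF c0] by (simp add: y_def J_def)
    have yA: "y \<notin> Aset"
    proof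
      assume "y \<in> Aset"
      then have "1 \<in> conductor y" by (simp add: conductor_def emb_def One_fract_def[symmetric])
      then show False using Cy JQ prime_one[OF Qp] by blast
    qed
    have "conductor y \<subseteq> \<Union>\<P>" using Cy JQ QU by blast
    then obtain P where P: "P \<in> \<P>" "conductor y \<subseteq> P" using c2 yA by blast
    then have P: "P \<in> \<P>" "J \<subseteq> P" using Cy by auto
    obtain Q'' where Q'': "minimal_prime_over Q'' J" "Q'' \<subseteq> P"
      using minimal_below[OF _ P(2)] primes P(1) by blast
    have "Q'' \<in> F" using Q'' by (auto simp: F_def J_def associated_prime_def)
    show ?thesis
    proof (cases "Q \<subseteq> Q''")
      case True
      then show ?thesis using Q'' P by blast
    next
      case False
      then have "Q'' \<in> G" using \<open>Q'' \<in> F\<close> by (simp add: G_def)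
      then have "sf Q'' \<in> J" using st Jiff by blast
      then have "sf Q'' \<in> Q''" using Q'' by (auto simp: minimal_prime_over_def)
      then show ?thesis using usf \<open>Q'' \<in> G\<close> by blast
    qed
  qed
qed

theorem theorem2p4:
  fixes \<P> :: "'a::idom set set"
  assumes primes: "\<forall>P\<in>\<P>. is_prime_ideal P"
  defines "B \<equiv> (\<Inter>P\<in>\<P>. loc_at_prime P)"
  shows "(is_localization B \<longleftrightarrow>
           (\<forall>x. x \<notin> Aset \<and> conductor x \<subseteq> \<Union>\<P> \<longrightarrow> (\<exists>P\<in>\<P>. conductor x \<subseteq> P)))
       \<and> ((\<forall>c::'a. finite {Q. associated_prime Q (principal_ideal c)}) \<longrightarrow>
           (is_localization B \<longleftrightarrow>
             (\<forall>Q. (\<exists>c. associated_prime Q (principal_ideal c)) \<and> Q \<subseteq> \<Union>\<P>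
                  \<longrightarrow> (\<exists>P\<in>\<P>. Q \<subseteq> P))))"
proof -
  have eq1: "is_localization B \<longleftrightarrow>
           (\<forall>x. x \<notin> Aset \<and> conductor x \<subseteq> \<Union>\<P> \<longrightarrow> (\<exists>P\<in>\<P>. conductor x \<subseteq> P))"
    unfolding B_def using part1_fwd[OF primes] part1_bwd[OF primes] by blast
  moreover have "(\<forall>c::'a. finite {Q. associated_prime Q (principal_ideal c)}) \<longrightarrow>
           ((\<forall>x. x \<notin> Aset \<and> conductor x \<subseteq> \<Union>\<P> \<longrightarrow> (\<exists>P\<in>\<P>. conductor x \<subseteq> P)) \<longleftrightarrow>
             (\<forall>Q. (\<exists>c. associated_prime Q (principal_ideal c)) \<and> Q \<subseteq> \<Union>\<P>
                  \<longrightarrow> (\<exists>P\<in>\<P>. Q \<subseteq> P)))"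
  proof (intro impI iffI)
    assume fin: "\<forall>c::'a. finite {Q. associated_prime Q (principal_ideal c)}"
      and c2: "\<forall>x. x \<notin> Aset \<and> conductor x \<subseteq> \<Union>\<P> \<longrightarrow> (\<exists>P\<in>\<P>. conductor x \<subseteq> P)"
    show "\<forall>Q. (\<exists>c. associated_prime Q (principal_ideal c)) \<and> Q \<subseteq> \<Union>\<P> \<longrightarrow> (\<exists>P\<in>\<P>. Q \<subseteq> P)"
      using c2_to_c3[OF primes fin c2] unfolding associated_prime_def by blast
  next
    assume fin: "\<forall>c::'a. finite {Q. associated_prime Q (principal_ideal c)}"
      and c3: "\<forall>Q. (\<exists>c. associated_prime Q (principal_ideal c)) \<and> Q \<subseteq> \<Union>\<P> \<longrightarrow> (\<exists>P\<in>\<P>. Q \<subseteq> P)"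
    show "\<forall>x. x \<notin> Aset \<and> conductor x \<subseteq> \<Union>\<P> \<longrightarrow> (\<exists>P\<in>\<P>. conductor x \<subseteq> P)"
      using c3_to_c2[OF primes fin c3] by blast
  qed
  ultimately show ?thesis by blast
qed

end
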